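(* Let $\hat R$ be the $4\times 4$ matrix $$\hat R=\begin{pmatrix}1&0&0&1\\0&1&-1&0\\0&1&1&0\\-1&0&0&1\end{pmatrix},$$ let $c$ be a complex-valued function on a multiplicatively closed set $G\subseteq\mathbb C\setminus\{0\}$ (e.g. $G=\mathbb C\setminus\{0\}$), and set $\hat R(x)=I+c(x)\hat R$. Then for all $x,y\in G$, $$\hat R_{(12)}(x)\hat R_{(23)}(xy)\hat R_{(12)}(y)-\hat R_{(23)}(y)\hat R_{(12)}(xy)\hat R_{(23)}(x)=\big(c(x)+c(y)+2c(x)c(y)-c(xy)\big)\big(\hat R_{(12)}-\hat R_{(23)}\big).$$ Consequently $\hat R(x)$ satisfies the parametrised Yang–Baxter equation $\hat R_{(12)}(x)\hat R_{(23)}(xy)\hat R_{(12)}(y)=\hat R_{(23)}(y)\hat R_{(12)}(xy)\hat R_{(23)}(x)$ for all $x,y\in G$ if and only if $c(x)+c(y)+2c(x)c(y)=c(xy)$ for all $x,y\in G$; in particular this holds for $c(x)=\tfrac12(x^p-1)$ for any integer $p$.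
   Context: $I$ is the identity matrix of the relevant size. For a $4\times4$ matrix $A$ acting on $\mathbb C^2\otimes\mathbb C^2$ (basis ordered $e_1\otimes e_1,e_1\otimes e_2,e_2\otimes e_1,e_2\otimes e_2$), $A_{(12)}=A\otimes I_2$ and $A_{(23)}=I_2\otimes A$ acting on $(\mathbb C^2)^{\otimes 3}$. *)

theory Defs
  imports "Jordan_Normal_Form.Matrix" Complex_Main
begin

text \<open>Kronecker (tensor) product of matrices; basis of C^2 (x) C^2 ordered
  e1e1, e1e2, e2e1, e2e2, i.e. index 2*a + b.\<close>
definition kron :: "complex mat \<Rightarrow> complex mat \<Rightarrow> complex mat" where
  "kron A B = mat (dim_row A * dim_row B) (dim_col A * dim_col B)
     (\<lambda>(i,j). A $$ (i div dim_row B, j div dim_col B) * B $$ (i mod dim_row B, j mod dim_col B))"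

definition Rhat :: "complex mat" where
  "Rhat = mat_of_rows_list 4 [[1,0,0,1],[0,1,-1,0],[0,1,1,0],[-1,0,0,1]]"

definition Rpar :: "(complex \<Rightarrow> complex) \<Rightarrow> complex \<Rightarrow> complex mat" where
  "Rpar c x = 1\<^sub>m 4 + c x \<cdot>\<^sub>m Rhat"

definition op12 :: "complex mat \<Rightarrow> complex mat" where
  "op12 A = kron A (1\<^sub>m 2)"

definition op23 :: "complex mat \<Rightarrow> complex mat" where
  "op23 A = kron (1\<^sub>m 2) A"

end

theory Submission imports Defs begin

lemma Rhat_ent: "i < 4 \<Longrightarrow> j < 4 \<Longrightarrow> Rhat $$ (i,j) = [[1,0,0,1],[0,1,-1,0],[0,1,1,0],[-1,0,0,1::complex]] ! i ! j"
  by (simp add: Rhat_def mat_of_rows_list_def)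
lemma dimR[simp]: "dim_row Rhat = 4" "dim_col Rhat = 4" by (simp_all add: Rhat_def mat_of_rows_list_def)

lemma lt8: "(i::nat) < 8 \<Longrightarrow> i = 0 \<or> i = 1 \<or> i = 2 \<or> i = 3 \<or> i = 4 \<or> i = 5 \<or> i = 6 \<or> i = 7" by auto
lemma sum8: "(\<Sum>k<(8::nat). f k) = f 0 + f 1 + f 2 + f 3 + f 4 + f 5 + f 6 + (f 7 :: complex)"
  by (simp add: eval_nat_numeral)

definition Mx :: "complex list list \<Rightarrow> complex mat" where
  "Mx L = mat 8 8 (\<lambda>(i,j). L ! i ! j)"

lemma Mx_mult: assumes "\<And>i j. i < 8 \<Longrightarrow> j < 8 \<Longrightarrow> (\<Sum>k<8. A ! i ! k * B ! k ! j) = C ! i ! j"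
  shows "Mx A * Mx B = Mx C"
  by (rule eq_matI) (auto simp: Mx_def scalar_prod_def row_def col_def assms[symmetric] atLeast0LessThan intro!: sum.cong)

definition L12 :: "complex \<Rightarrow> complex list list" where
  "L12 a = [[(1 + a), 0, 0, 0, 0, 0, (a), 0], [0, (1 + a), 0, 0, 0, 0, 0, (a)], [0, 0, (1 + a), 0, (-a), 0, 0, 0], [0, 0, 0, (1 + a), 0, (-a), 0, 0], [0, 0, (a), 0, (1 + a), 0, 0, 0], [0, 0, 0, (a), 0, (1 + a), 0, 0], [(-a), 0, 0, 0, 0, 0, (1 + a), 0], [0, (-a), 0, 0, 0, 0, 0, (1 + a)]]"

definition L23 :: "complex \<Rightarrow> complex list list" where
  "L23 e = [[(1 + e), 0, 0, (e), 0, 0, 0, 0], [0, (1 + e), (-e), 0, 0, 0, 0, 0], [0, (e), (1 + e), 0, 0, 0, 0, 0], [(-e), 0, 0, (1 + e), 0, 0, 0, 0], [0, 0, 0, 0, (1 + e), 0, 0, (e)], [0, 0, 0, 0, 0, (1 + e), (-e), 0], [0, 0, 0, 0, 0, (e), (1 + e), 0], [0, 0, 0, 0, (-e), 0, 0, (1 + e)]]"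

definition LM1 :: "complex \<Rightarrow> complex \<Rightarrow> complex list list" where
  "LM1 a e = [[(1 + e + a + a*e), 0, 0, (e + a*e), 0, (a*e), (a + a*e), 0], [0, (1 + e + a + a*e), (-e - a*e), 0, (-a*e), 0, 0, (a + a*e)], [0, (e + a*e), (1 + e + a + a*e), 0, (-a - a*e), 0, 0, (-a*e)], [(-e - a*e), 0, 0, (1 + e + a + a*e), 0, (-a - a*e), (a*e), 0], [0, (a*e), (a + a*e), 0, (1 + e + a + a*e), 0, 0, (e + a*e)], [(-a*e), 0, 0, (a + a*e), 0, (1 + e + a + a*e), (-e - a*e), 0], [(-a - a*e), 0, 0, (-a*e), 0, (e + a*e), (1 + e + a + a*e), 0], [0, (-a - a*e), (a*e), 0, (-e - a*e), 0, 0, (1 + e + a + a*e)]]"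

definition LM2 :: "complex \<Rightarrow> complex \<Rightarrow> complex \<Rightarrow> complex list list" where
  "LM2 a b e = [[(1 + e + b + b*e + a + a*e), 0, 0, (e + b*e + a*e + 2*a*b*e), 0, (-b*e + a*e), (b + b*e + a + a*e + 2*a*b + 2*a*b*e), 0], [0, (1 + e + b + b*e + a + a*e), (-e - b*e - a*e - 2*a*b*e), 0, (b*e - a*e), 0, 0, (b + b*e + a + a*e + 2*a*b + 2*a*b*e)], [0, (e + b*e + a*e + 2*a*b*e), (1 + e + b + b*e + a + a*e), 0, (-b - b*e - a - a*e - 2*a*b - 2*a*b*e), 0, 0, (b*e - a*e)], [(-e - b*e - a*e - 2*a*b*e), 0, 0, (1 + e + b + b*e + a + a*e), 0, (-b - b*e - a - a*e - 2*a*b - 2*a*b*e), (-b*e + a*e), 0], [0, (-b*e + a*e), (b + b*e + a + a*e + 2*a*b + 2*a*b*e), 0, (1 + e + b + b*e + a + a*e), 0, 0, (e + b*e + a*e + 2*a*b*e)], [(b*e - a*e), 0, 0, (b + b*e + a + a*e + 2*a*b + 2*a*b*e), 0, (1 + e + b + b*e + a + a*e), (-e - b*e - a*e - 2*a*b*e), 0], [(-b - b*e - a - a*e - 2*a*b - 2*a*b*e), 0, 0, (b*e - a*e), 0, (e + b*e + a*e + 2*a*b*e), (1 + e + b + b*e + a + a*e), 0], [0, (-b - b*e - a - a*e - 2*a*b - 2*a*b*e), (-b*e + a*e), 0, (-e - b*e - a*e - 2*a*b*e), 0, 0, (1 + e + b + b*e + a + a*e)]]"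

definition LN1 :: "complex \<Rightarrow> complex \<Rightarrow> complex list list" where
  "LN1 b e = [[(1 + e + b + b*e), 0, 0, (b + b*e), 0, (-b*e), (e + b*e), 0], [0, (1 + e + b + b*e), (-b - b*e), 0, (b*e), 0, 0, (e + b*e)], [0, (b + b*e), (1 + e + b + b*e), 0, (-e - b*e), 0, 0, (b*e)], [(-b - b*e), 0, 0, (1 + e + b + b*e), 0, (-e - b*e), (-b*e), 0], [0, (-b*e), (e + b*e), 0, (1 + e + b + b*e), 0, 0, (b + b*e)], [(b*e), 0, 0, (e + b*e), 0, (1 + e + b + b*e), (-b - b*e), 0], [(-e - b*e), 0, 0, (b*e), 0, (b + b*e), (1 + e + b + b*e), 0], [0, (-e - b*e), (-b*e), 0, (-b - b*e), 0, 0, (1 + e + b + b*e)]]"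

definition LN2 :: "complex \<Rightarrow> complex \<Rightarrow> complex \<Rightarrow> complex list list" where
  "LN2 a b e = [[(1 + e + b + b*e + a + a*e), 0, 0, (b + b*e + a + a*e + 2*a*b + 2*a*b*e), 0, (-b*e + a*e), (e + b*e + a*e + 2*a*b*e), 0], [0, (1 + e + b + b*e + a + a*e), (-b - b*e - a - a*e - 2*a*b - 2*a*b*e), 0, (b*e - a*e), 0, 0, (e + b*e + a*e + 2*a*b*e)], [0, (b + b*e + a + a*e + 2*a*b + 2*a*b*e), (1 + e + b + b*e + a + a*e), 0, (-e - b*e - a*e - 2*a*b*e), 0, 0, (b*e - a*e)], [(-b - b*e - a - a*e - 2*a*b - 2*a*b*e), 0, 0, (1 + e + b + b*e + a + a*e), 0, (-e - b*e - a*e - 2*a*b*e), (-b*e + a*e), 0], [0, (-b*e + a*e), (e + b*e + a*e + 2*a*b*e), 0, (1 + e + b + b*e + a + a*e), 0, 0, (b + b*e + a + a*e + 2*a*b + 2*a*b*e)], [(b*e - a*e), 0, 0, (e + b*e + a*e + 2*a*b*e), 0, (1 + e + b + b*e + a + a*e), (-b - b*e - a - a*e - 2*a*b - 2*a*b*e), 0], [(-e - b*e - a*e - 2*a*b*e), 0, 0, (b*e - a*e), 0, (b + b*e + a + a*e + 2*a*b + 2*a*b*e), (1 + e + b + b*e + a + a*e), 0], [0, (-e - b*e - a*e - 2*a*b*e), (-b*e + a*e), 0, (-b - b*e - a - a*e - 2*a*b - 2*a*b*e), 0, 0, (1 + e + b + b*e + a + a*e)]]"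

definition LP :: "complex list list" where
  "LP  = [[(1), 0, 0, 0, 0, 0, (1), 0], [0, (1), 0, 0, 0, 0, 0, (1)], [0, 0, (1), 0, (-1), 0, 0, 0], [0, 0, 0, (1), 0, (-1), 0, 0], [0, 0, (1), 0, (1), 0, 0, 0], [0, 0, 0, (1), 0, (1), 0, 0], [(-1), 0, 0, 0, 0, 0, (1), 0], [0, (-1), 0, 0, 0, 0, 0, (1)]]"

definition LQ :: "complex list list" where
  "LQ  = [[(1), 0, 0, (1), 0, 0, 0, 0], [0, (1), (-1), 0, 0, 0, 0, 0], [0, (1), (1), 0, 0, 0, 0, 0], [(-1), 0, 0, (1), 0, 0, 0, 0], [0, 0, 0, 0, (1), 0, 0, (1)], [0, 0, 0, 0, 0, (1), (-1), 0], [0, 0, 0, 0, 0, (1), (1), 0], [0, 0, 0, 0, (-1), 0, 0, (1)]]"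

lemma op12_eq: "op12 (1\<^sub>m 4 + a \<cdot>\<^sub>m Rhat) = Mx (L12 a)"
  apply (rule eq_matI)
  apply (simp_all add: op12_def kron_def Mx_def)
  apply (drule lt8, drule lt8, elim disjE)
  apply (simp_all add: L12_def Rhat_def mat_of_rows_list_def)
  done

lemma m1: "Mx (L12 a) * Mx (L23 e) = Mx (LM1 a e)"
  apply (rule Mx_mult)
  apply (drule lt8, drule lt8, elim disjE)
  apply (simp_all add: sum8 L12_def L23_def LM1_def algebra_simps)
  done

lemma op23_eq: "op23 (1\<^sub>m 4 + a \<cdot>\<^sub>m Rhat) = Mx (L23 a)"
  apply (rule eq_matI)
  apply (simp_all add: op23_def kron_def Mx_def)
  apply (drule lt8, drule lt8, elim disjE)
  apply (simp_all add: L23_def Rhat_def mat_of_rows_list_def)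
  done

lemma opP: "op12 Rhat = Mx LP"
  apply (rule eq_matI)
  apply (simp_all add: op12_def kron_def Mx_def)
  apply (drule lt8, drule lt8, elim disjE)
  apply (simp_all add: LP_def Rhat_def mat_of_rows_list_def)
  done

lemma opQ: "op23 Rhat = Mx LQ"
  apply (rule eq_matI)
  apply (simp_all add: op23_def kron_def Mx_def)
  apply (drule lt8, drule lt8, elim disjE)
  apply (simp_all add: LQ_def Rhat_def mat_of_rows_list_def)
  done

lemma m2: "Mx (LM1 a e) * Mx (L12 b) = Mx (LM2 a b e)"
  apply (rule Mx_mult)
  apply (drule lt8, drule lt8, elim disjE)
  apply (simp_all add: sum8 L12_def LM2_def LM1_def algebra_simps)
  done

lemma n1: "Mx (L23 b) * Mx (L12 e) = Mx (LN1 b e)"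
  apply (rule Mx_mult)
  apply (drule lt8, drule lt8, elim disjE)
  apply (simp_all add: sum8 L12_def L23_def LN1_def algebra_simps)
  done

lemma n2: "Mx (LN1 b e) * Mx (L23 a) = Mx (LN2 a b e)"
  apply (rule Mx_mult)
  apply (drule lt8, drule lt8, elim disjE)
  apply (simp_all add: sum8 L23_def LN2_def LN1_def algebra_simps)
  done

lemma fin: "Mx (LM2 a b e) - Mx (LN2 a b e) = (a + b + 2*a*b - e) \<cdot>\<^sub>m (Mx LP - Mx LQ)"
  apply (rule eq_matI)
  apply (simp_all add: Mx_def)
  apply (drule lt8, drule lt8, elim disjE)
  apply (simp_all add: LM2_def LN2_def LP_def LQ_def algebra_simps)
  done

lemma keyid: "op12 (Rpar c x) * op23 (Rpar c (x*y)) * op12 (Rpar c y)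
          - op23 (Rpar c y) * op12 (Rpar c (x*y)) * op23 (Rpar c x)
          = (c x + c y + 2 * c x * c y - c (x*y)) \<cdot>\<^sub>m (op12 Rhat - op23 Rhat)"
  unfolding Rpar_def op12_eq op23_eq opP opQ m1 m2 n1 n2 fin by simp

lemma dims: "dim_row (op12 (Rpar c x)) = 8" "dim_col (op12 (Rpar c x)) = 8"
  "dim_row (op23 (Rpar c x)) = 8" "dim_col (op23 (Rpar c x)) = 8"
  by (simp_all add: op12_def op23_def kron_def Rpar_def)

lemma PQne: "(k::complex) \<cdot>\<^sub>m (op12 Rhat - op23 Rhat) = 0\<^sub>m 8 8 \<Longrightarrow> k = 0"
proof -
  assume h: "k \<cdot>\<^sub>m (op12 Rhat - op23 Rhat) = 0\<^sub>m 8 8"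
  have "(k \<cdot>\<^sub>m (op12 Rhat - op23 Rhat)) $$ (0,6) = k"
    unfolding opP opQ by (simp add: Mx_def LP_def LQ_def)
  then show ?thesis using h by simp
qed

lemma ybe_iff: "(\<forall>x\<in>G. \<forall>y\<in>G.
            op12 (Rpar c x) * op23 (Rpar c (x*y)) * op12 (Rpar c y)
          = op23 (Rpar c y) * op12 (Rpar c (x*y)) * op23 (Rpar c x))
          \<longleftrightarrow> (\<forall>x\<in>G. \<forall>y\<in>G. c x + c y + 2 * c x * c y = c (x*y))"
proof -
  have "(op12 (Rpar c x) * op23 (Rpar c (x*y)) * op12 (Rpar c y)
          = op23 (Rpar c y) * op12 (Rpar c (x*y)) * op23 (Rpar c x))
       \<longleftrightarrow> c x + c y + 2 * c x * c y = c (x*y)" for x y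
  proof -
    let ?A = "op12 (Rpar c x) * op23 (Rpar c (x*y)) * op12 (Rpar c y)"
    let ?B = "op23 (Rpar c y) * op12 (Rpar c (x*y)) * op23 (Rpar c x)"
    have dA: "?A \<in> carrier_mat 8 8" "?B \<in> carrier_mat 8 8"
      unfolding Rpar_def op12_eq op23_eq m1 m2 n1 n2 by (simp_all add: Mx_def)
    have "?A = ?B \<longleftrightarrow> ?A - ?B = 0\<^sub>m 8 8"
    proof
      assume "?A = ?B" then show "?A - ?B = 0\<^sub>m 8 8" using dA by simp
    next
      assume h: "?A - ?B = 0\<^sub>m 8 8"
      show "?A = ?B"
      proof (rule eq_matI)
        fix i j assume ij: "i < dim_row ?B" "j < dim_col ?B"
        have i8: "i < 8" "j < 8" using ij dA by auto
        have "(?A - ?B) $$ (i,j) = 0" using h i8 by simp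
        then show "?A $$ (i,j) = ?B $$ (i,j)" using dA ij by simp
      qed (simp_all add: dims)
    qed
    also have "\<dots> \<longleftrightarrow> c x + c y + 2 * c x * c y = c (x*y)"
      unfolding keyid
    proof
      assume "(c x + c y + 2 * c x * c y - c (x * y)) \<cdot>\<^sub>m (op12 Rhat - op23 Rhat) = 0\<^sub>m 8 8"
      then show "c x + c y + 2 * c x * c y = c (x*y)" by (auto dest: PQne)
    next
      assume "c x + c y + 2 * c x * c y = c (x*y)"
      then show "(c x + c y + 2 * c x * c y - c (x * y)) \<cdot>\<^sub>m (op12 Rhat - op23 Rhat) = 0\<^sub>m 8 8"
        unfolding opP opQ by (auto simp: Mx_def)
    qed
    finally show ?thesis .
  qed
  then show ?thesis by blast
qed

lemma dfun: "((x::complex) powi p - 1) / 2 + (y powi p - 1) / 2 + 2 * ((x powi p - 1) / 2) * ((y powi p - 1) / 2)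
   = ((x*y) powi p - 1) / 2"
  by (simp add: power_int_mult_distrib field_simps)

theorem mainTheorem2:
  fixes G :: "complex set" and c :: "complex \<Rightarrow> complex"
  assumes G0: "0 \<notin> G"
    and Gmult: "\<And>x y. x \<in> G \<Longrightarrow> y \<in> G \<Longrightarrow> x * y \<in> G"
  shows "(\<forall>x\<in>G. \<forall>y\<in>G.
            op12 (Rpar c x) * op23 (Rpar c (x*y)) * op12 (Rpar c y)
          - op23 (Rpar c y) * op12 (Rpar c (x*y)) * op23 (Rpar c x)
          = (c x + c y + 2 * c x * c y - c (x*y)) \<cdot>\<^sub>m (op12 Rhat - op23 Rhat))
       \<and> ((\<forall>x\<in>G. \<forall>y\<in>G.
            op12 (Rpar c x) * op23 (Rpar c (x*y)) * op12 (Rpar c y)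
          = op23 (Rpar c y) * op12 (Rpar c (x*y)) * op23 (Rpar c x))
          \<longleftrightarrow> (\<forall>x\<in>G. \<forall>y\<in>G. c x + c y + 2 * c x * c y = c (x*y)))
       \<and> (\<forall>p::int. let d = (\<lambda>x::complex. (x powi p - 1) / 2) in
            (\<forall>x\<in>G. \<forall>y\<in>G. d x + d y + 2 * d x * d y = d (x*y)) \<and>
            (\<forall>x\<in>G. \<forall>y\<in>G.
              op12 (Rpar d x) * op23 (Rpar d (x*y)) * op12 (Rpar d y)
            = op23 (Rpar d y) * op12 (Rpar d (x*y)) * op23 (Rpar d x)))"
proof (intro conjI allI)
  show "\<forall>x\<in>G. \<forall>y\<in>G.
            op12 (Rpar c x) * op23 (Rpar c (x*y)) * op12 (Rpar c y)
          - op23 (Rpar c y) * op12 (Rpar c (x*y)) * op23 (Rpar c x)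
          = (c x + c y + 2 * c x * c y - c (x*y)) \<cdot>\<^sub>m (op12 Rhat - op23 Rhat)"
    using keyid by blast
next
  show "(\<forall>x\<in>G. \<forall>y\<in>G.
            op12 (Rpar c x) * op23 (Rpar c (x*y)) * op12 (Rpar c y)
          = op23 (Rpar c y) * op12 (Rpar c (x*y)) * op23 (Rpar c x))
          \<longleftrightarrow> (\<forall>x\<in>G. \<forall>y\<in>G. c x + c y + 2 * c x * c y = c (x*y))"
    by (rule ybe_iff)
next
  fix p :: int
  define d where "d = (\<lambda>x::complex. (x powi p - 1) / 2)"
  have fe: "\<forall>x\<in>G. \<forall>y\<in>G. d x + d y + 2 * d x * d y = d (x*y)"
    unfolding d_def using dfun by blast
  show "let d = (\<lambda>x::complex. (x powi p - 1) / 2) in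
            (\<forall>x\<in>G. \<forall>y\<in>G. d x + d y + 2 * d x * d y = d (x*y)) \<and>
            (\<forall>x\<in>G. \<forall>y\<in>G.
              op12 (Rpar d x) * op23 (Rpar d (x*y)) * op12 (Rpar d y)
            = op23 (Rpar d y) * op12 (Rpar d (x*y)) * op23 (Rpar d x))"
    unfolding Let_def d_def[symmetric] using fe ybe_iff[of G d] by blast
qed

end
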